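(* There is a constant $C_{\rm dist}>0$ depending only on $d$, $\widehat{\mathcal T}^0$ and $(p_1,\dots,p_d)$ such that: for every admissible hierarchical mesh $\widehat{\mathcal T}_\bullet$ and every $\widehat T'\in\widehat{\mathcal T}_\bullet$, with $\widehat{\mathcal T}_\circ={\tt refine}(\widehat{\mathcal T}_\bullet,\{\widehat T'\})$, it holds that ${\rm dist}(\widehat T,\widehat T')\le C_{\rm dist}\,2^{-{\rm level}(\widehat T)}$ for all $\widehat T\in\widehat{\mathcal T}_\circ\setminus\widehat{\mathcal T}_\bullet$, where ${\rm dist}$ denotes the Euclidean distance between the midpoints of the two boxes.
   Context: Parameter domain $\widehat\Omega=(0,1)^d$, $d\ge2$; degrees $p_1,\dots,p_d\ge1$. For each $i$, $\widehat{\mathcal K}^0_i$ is a $p_i$-open knot vector in $[0,1]$ (first $p_i+1$ knots $0$, last $p_i+1$ knots $1$, interior multiplicities $\le p_i$); $\widehat{\mathcal K}^{k+1}_i$ arises from $\widehat{\mathcal K}^k_i$ by inserting each nondegenerate span's midpoint once. $\widehat{\mathcal B}^k$: tensor-product B-splines of degree $(p_1,\dots,p_d)$ for $\widehat{\mathcal K}^k$; $\widehat{\mathcal T}^k$: closed cells of level $k$. A hierarchical mesh is given by closed sets $[0,1]^d=\widehat\Omega^0_\bullet\supseteq\widehat\Omega^1_\bullet\supseteq\cdots$, each $\widehat\Omega^k_\bullet$ ($k\ge1$) a union of cells of $\widehat{\mathcal T}^{k-1}$, eventually empty; mesh $\widehat{\mathcal T}_\bullet=\bigcup_k\{\widehat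 T\in\widehat{\mathcal T}^k:\widehat T\subseteq\widehat\Omega^k_\bullet,\widehat T\not\subseteq\widehat\Omega^{k+1}_\bullet\}$, ${\rm level}(\widehat T)=k$; hierarchical basis $\widehat{\mathcal H}_\bullet=\bigcup_k\{\widehat\beta\in\widehat{\mathcal B}^k:{\rm supp}\,\widehat\beta\subseteq\widehat\Omega^k_\bullet,{\rm supp}\,\widehat\beta\not\subseteq\widehat\Omega^{k+1}_\bullet\}$. Neighbors $\mathcal N_\bullet(\widehat T)=\{\widehat T'\in\widehat{\mathcal T}_\bullet:\exists\widehat\beta\in\widehat{\mathcal H}_\bullet,\widehat T,\widehat T'\subseteq{\rm supp}\,\widehat\beta\}$; bad neighbors $\mathcal N^{\rm bad}_\bullet(\widehat T)=\{\widehat T'\in\mathcal N_\bullet(\widehat T):{\rm level}(\widehat T')={\rm level}(\widehat T)-1\}$. Admissible: $|{\rm level}(\widehat T)-{\rm level}(\widehat T')|\le1$ whenever $\widehat T'\in\mathcal N_\bullet(\widehat T)$. ${\tt refine}(\widehat{\mathcal T}_\bullet,\widehat{\mathcal M})$: $\widehat{\mathcal M}^{(0)}=\widehat{\mathcal M}$, $\widehat{\mathcal M}^{(i+1)}=\widehat{\mathcal M}^{(i)}\cup\bigcup_{\widehat T\in\widehat{\mathcal M}^{(i)}}\mathcal N^{\rm bad}_\bullet(\widehat T)$ until stationary; each $\widehat T$ in the final set is added to $\widehat\Omega^{{\rm level}(\widehat T)+1}$. *)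

theory Defs
  imports "HOL-Analysis.Analysis"
begin

definition open_knots :: "nat \<Rightarrow> real list \<Rightarrow> bool" where
  "open_knots p ks \<longleftrightarrow> sorted ks \<and> set ks \<subseteq> {0..1} \<and>
     count_list ks 0 = p + 1 \<and> count_list ks 1 = p + 1 \<and>
     (\<forall>x\<in>set ks. 0 < x \<and> x < 1 \<longrightarrow> count_list ks x \<le> p)"

definition is_span :: "real list \<Rightarrow> real \<Rightarrow> real \<Rightarrow> bool" where
  "is_span ks a b \<longleftrightarrow> a \<in> set ks \<and> b \<in> set ks \<and> a < b \<and> \<not> (\<exists>c\<in>set ks. a < c \<and> c < b)"

definition span_midpoints :: "real list \<Rightarrow> real set" where
  "span_midpoints ks = {(a + b) / 2 | a b. is_span ks a b}"

definition refine_knots :: "real list \<Rightarrow> real list" where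
  "refine_knots ks = sort (ks @ sorted_list_of_set (span_midpoints ks))"

definition knots :: "('n \<Rightarrow> real list) \<Rightarrow> nat \<Rightarrow> 'n \<Rightarrow> real list" where
  "knots K0 k i = (refine_knots ^^ k) (K0 i)"

section \<open>B-splines (Cox--de Boor, with the convention x/0 = 0)\<close>

fun bspl :: "real list \<Rightarrow> nat \<Rightarrow> nat \<Rightarrow> real \<Rightarrow> real" where
  "bspl t 0 j x = (if t ! j \<le> x \<and> x < t ! (j + 1) then 1 else 0)"
| "bspl t (Suc q) j x =
     (x - t ! j) / (t ! (j + q + 1) - t ! j) * bspl t q j x
   + (t ! (j + q + 2) - x) / (t ! (j + q + 2) - t ! (j + 1)) * bspl t q (j + 1) x"

definition tp_bspline :: "('n::finite \<Rightarrow> nat) \<Rightarrow> ('n \<Rightarrow> real list) \<Rightarrow> nat \<Rightarrow> ('n \<Rightarrow> nat)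
    \<Rightarrow> real^'n \<Rightarrow> real" where
  "tp_bspline p K0 k j x = (\<Prod>i\<in>UNIV. bspl (knots K0 k i) (p i) (j i) (x $ i))"

definition bsplines :: "('n::finite \<Rightarrow> nat) \<Rightarrow> ('n \<Rightarrow> real list) \<Rightarrow> nat \<Rightarrow> (real^'n \<Rightarrow> real) set" where
  "bsplines p K0 k = {tp_bspline p K0 k j | j. \<forall>i. j i + p i + 1 < length (knots K0 k i)}"

definition supp :: "(real^'n \<Rightarrow> real) \<Rightarrow> (real^'n) set" where
  "supp f = closure {x. f x \<noteq> 0}"

definition cells :: "('n::finite \<Rightarrow> real list) \<Rightarrow> nat \<Rightarrow> (real^'n) set set" where
  "cells K0 k = {cbox a b | a b. \<forall>i. is_span (knots K0 k i) (a $ i) (b $ i)}"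

definition hier_domains :: "('n::finite \<Rightarrow> real list) \<Rightarrow> (nat \<Rightarrow> (real^'n) set) \<Rightarrow> bool" where
  "hier_domains K0 \<Omega> \<longleftrightarrow> \<Omega> 0 = cbox (vec 0) (vec 1) \<and> (\<forall>k. \<Omega> (Suc k) \<subseteq> \<Omega> k) \<and>
     (\<forall>k. \<exists>S \<subseteq> cells K0 k. \<Omega> (Suc k) = \<Union>S) \<and> (\<exists>N. \<forall>k\<ge>N. \<Omega> k = {})"

definition mesh :: "('n::finite \<Rightarrow> real list) \<Rightarrow> (nat \<Rightarrow> (real^'n) set) \<Rightarrow> (nat \<times> (real^'n) set) set" where
  "mesh K0 \<Omega> = {(k, T) | k T. T \<in> cells K0 k \<and> T \<subseteq> \<Omega> k \<and> \<not> T \<subseteq> \<Omega> (Suc k)}"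

definition hbasis :: "('n::finite \<Rightarrow> nat) \<Rightarrow> ('n \<Rightarrow> real list) \<Rightarrow> (nat \<Rightarrow> (real^'n) set)
    \<Rightarrow> (real^'n \<Rightarrow> real) set" where
  "hbasis p K0 \<Omega> = (\<Union>k. {\<beta> \<in> bsplines p K0 k. supp \<beta> \<subseteq> \<Omega> k \<and> \<not> supp \<beta> \<subseteq> \<Omega> (Suc k)})"

definition neighbors :: "('n::finite \<Rightarrow> nat) \<Rightarrow> ('n \<Rightarrow> real list) \<Rightarrow> (nat \<Rightarrow> (real^'n) set)
    \<Rightarrow> nat \<times> (real^'n) set \<Rightarrow> (nat \<times> (real^'n) set) set" where
  "neighbors p K0 \<Omega> T = {T' \<in> mesh K0 \<Omega>. \<exists>\<beta> \<in> hbasis p K0 \<Omega>. snd T \<subseteq> supp \<beta> \<and> snd T' \<subseteq> supp \<beta>}"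

definition bad_neighbors :: "('n::finite \<Rightarrow> nat) \<Rightarrow> ('n \<Rightarrow> real list) \<Rightarrow> (nat \<Rightarrow> (real^'n) set)
    \<Rightarrow> nat \<times> (real^'n) set \<Rightarrow> (nat \<times> (real^'n) set) set" where
  "bad_neighbors p K0 \<Omega> T = {T' \<in> neighbors p K0 \<Omega> T. fst T' + 1 = fst T}"

definition admissible :: "('n::finite \<Rightarrow> nat) \<Rightarrow> ('n \<Rightarrow> real list) \<Rightarrow> (nat \<Rightarrow> (real^'n) set) \<Rightarrow> bool" where
  "admissible p K0 \<Omega> \<longleftrightarrow> (\<forall>T \<in> mesh K0 \<Omega>. \<forall>T' \<in> neighbors p K0 \<Omega> T.
      \<bar>int (fst T) - int (fst T')\<bar> \<le> 1)"

fun marked :: "('n::finite \<Rightarrow> nat) \<Rightarrow> ('n \<Rightarrow> real list) \<Rightarrow> (nat \<Rightarrow> (real^'n) set)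
    \<Rightarrow> (nat \<times> (real^'n) set) set \<Rightarrow> nat \<Rightarrow> (nat \<times> (real^'n) set) set" where
  "marked p K0 \<Omega> M 0 = M"
| "marked p K0 \<Omega> M (Suc i) = marked p K0 \<Omega> M i \<union> (\<Union>T \<in> marked p K0 \<Omega> M i. bad_neighbors p K0 \<Omega> T)"

text \<open>The final (stationary) marked set is the union of the increasing sequence.\<close>
definition marked_final :: "('n::finite \<Rightarrow> nat) \<Rightarrow> ('n \<Rightarrow> real list) \<Rightarrow> (nat \<Rightarrow> (real^'n) set)
    \<Rightarrow> (nat \<times> (real^'n) set) set \<Rightarrow> (nat \<times> (real^'n) set) set" where
  "marked_final p K0 \<Omega> M = (\<Union>i. marked p K0 \<Omega> M i)"

definition refine :: "('n::finite \<Rightarrow> nat) \<Rightarrow> ('n \<Rightarrow> real list) \<Rightarrow> (nat \<Rightarrow> (real^'n) set)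
    \<Rightarrow> (nat \<times> (real^'n) set) set \<Rightarrow> nat \<Rightarrow> (real^'n) set" where
  "refine p K0 \<Omega> M k = (case k of 0 \<Rightarrow> \<Omega> 0
     | Suc l \<Rightarrow> \<Omega> (Suc l) \<union> \<Union>{T. (l, T) \<in> marked_final p K0 \<Omega> M})"

definition box_center :: "(real^'n::finite) set \<Rightarrow> real^'n" where
  "box_center T = (\<chi> i. (Inf ((\<lambda>x. x $ i) ` T) + Sup ((\<lambda>x. x $ i) ` T)) / 2)"

end

theory Submission
  imports Defs
begin


lemma finite_span_midpoints: "finite (span_midpoints ks)"
proof -
  have "span_midpoints ks \<subseteq> (\<lambda>(a,b). (a+b)/2) ` (set ks \<times> set ks)"
  proof
    fix x assume "x \<in> span_midpoints ks"
    then obtain a b where "x = (a+b)/2" "a \<in> set ks" "b \<in> set ks"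
      unfolding span_midpoints_def is_span_def by auto
    thus "x \<in> (\<lambda>(a,b). (a+b)/2) ` (set ks \<times> set ks)" by (intro image_eqI[where x="(a,b)"]) auto
  qed
  thus ?thesis by (rule finite_subset) auto
qed

lemma set_refine_knots: "set (refine_knots ks) = set ks \<union> span_midpoints ks"
  unfolding refine_knots_def using finite_span_midpoints by simp

lemma sorted_refine_knots: "sorted (refine_knots ks)"
  unfolding refine_knots_def by simp

lemma span_half:
  assumes h: "\<And>a b. is_span ks a b \<Longrightarrow> b - a \<le> h"
    and sp: "is_span (refine_knots ks) a b"
  shows "b - a \<le> h / 2"
proof -
  have ab: "a < b" "a \<in> set ks \<union> span_midpoints ks" "b \<in> set ks \<union> span_midpoints ks"
    and nob: "\<And>c. c \<in> set ks \<union> span_midpoints ks \<Longrightarrow> \<not> (a < c \<and> c < b)"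
    using sp unfolding is_span_def set_refine_knots by auto
  have "\<exists>c\<in>set ks. c \<le> a"
  proof (cases "a \<in> set ks")
    case False
    then obtain u v where "is_span ks u v" "a = (u+v)/2" using ab unfolding span_midpoints_def by auto
    thus ?thesis unfolding is_span_def by (intro bexI[of _ u]) auto
  qed auto
  then have ne1: "{c\<in>set ks. c \<le> a} \<noteq> {}" by auto
  have "\<exists>c\<in>set ks. b \<le> c"
  proof (cases "b \<in> set ks")
    case False
    then obtain u v where "is_span ks u v" "b = (u+v)/2" using ab unfolding span_midpoints_def by auto
    thus ?thesis unfolding is_span_def by (intro bexI[of _ v]) auto
  qed auto
  then have ne2: "{c\<in>set ks. b \<le> c} \<noteq> {}" by auto
  define a' where "a' = Max {c\<in>set ks. c \<le> a}"
  define b' where "b' = Min {c\<in>set ks. b \<le> c}"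
  have a': "a' \<in> set ks" "a' \<le> a" "\<And>c. c \<in> set ks \<Longrightarrow> c \<le> a \<Longrightarrow> c \<le> a'"
    using Max_in[OF _ ne1] Max_ge[of "{c\<in>set ks. c \<le> a}"] unfolding a'_def by auto
  have b': "b' \<in> set ks" "b \<le> b'" "\<And>c. c \<in> set ks \<Longrightarrow> b \<le> c \<Longrightarrow> b' \<le> c"
    using Min_in[OF _ ne2] Min_le[of "{c\<in>set ks. b \<le> c}"] unfolding b'_def by auto
  have sp': "is_span ks a' b'"
    unfolding is_span_def
  proof (intro conjI a'(1) b'(1))
    show "a' < b'" using a'(2) b'(2) ab(1) by linarith
    show "\<not> (\<exists>c\<in>set ks. a' < c \<and> c < b')"
    proof
      assume "\<exists>c\<in>set ks. a' < c \<and> c < b'"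
      then obtain c where c: "c \<in> set ks" "a' < c" "c < b'" by auto
      have "\<not> c \<le> a" using a'(3)[OF c(1)] c(2) by linarith
      moreover have "\<not> b \<le> c" using b'(3)[OF c(1)] c(3) by linarith
      ultimately show False using nob[of c] c(1) by auto
    qed
  qed
  have m: "(a'+b')/2 \<in> span_midpoints ks" using sp' unfolding span_midpoints_def by auto
  have "b' - a' \<le> h" using h[OF sp'] .
  moreover have "(a'+b')/2 \<le> a \<or> b \<le> (a'+b')/2" using nob[of "(a'+b')/2"] m by auto
  ultimately show ?thesis using a'(2) b'(2) by auto
qed

lemma knots_Suc: "knots K0 (Suc k) i = refine_knots (knots K0 k i)"
  unfolding knots_def by simp

lemma knots_0: "knots K0 0 i = K0 i"
  unfolding knots_def by simp

lemma sorted_knots: "sorted (K0 i) \<Longrightarrow> sorted (knots K0 k i)"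
  by (cases k) (auto simp: knots_Suc knots_0 sorted_refine_knots)

lemma span_knots:
  assumes "set (K0 i) \<subseteq> {0..1}"
  shows "is_span (knots K0 k i) a b \<Longrightarrow> b - a \<le> (1/2)^k"
proof (induction k arbitrary: a b)
  case 0
  then have "a \<in> {0..1}" "b \<in> {0..1}" using assms unfolding knots_0 is_span_def by auto
  then show ?case by simp
next
  case (Suc k)
  have "b - a \<le> (1/2)^k / 2"
    using span_half[of "knots K0 k i" "(1/2)^k" a b] Suc by (auto simp: knots_Suc)
  thus ?case by simp
qed

lemma bspl_supp:
  assumes "sorted t"
  shows "j + q + 1 < length t \<Longrightarrow> bspl t q j x \<noteq> 0 \<Longrightarrow> t ! j \<le> x \<and> x < t ! (j + q + 1)"
proof (induction q arbitrary: j)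
  case 0
  then show ?case by (auto split: if_splits)
next
  case (Suc q)
  have m1: "t ! j \<le> t ! (j+1)" "t ! (j+q+1) \<le> t ! (j+q+2)"
    using Suc.prems(1) assms by (auto intro: sorted_nth_mono)
  from Suc.prems(2) have "bspl t q j x \<noteq> 0 \<or> bspl t q (j+1) x \<noteq> 0" by auto
  then show ?case
  proof
    assume "bspl t q j x \<noteq> 0"
    then have "t ! j \<le> x \<and> x < t ! (j + q + 1)" using Suc.IH[of j] Suc.prems by auto
    then show ?thesis using m1 by auto
  next
    assume "bspl t q (j+1) x \<noteq> 0"
    then have "t ! (j+1) \<le> x \<and> x < t ! (j + 1 + q + 1)" using Suc.IH[of "j+1"] Suc.prems by auto
    then show ?thesis using m1 by auto
  qed
qed

lemma bspl_nonneg: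
  assumes "sorted t"
  shows "j + q + 1 < length t \<Longrightarrow> 0 \<le> bspl t q j x"
proof (induction q arbitrary: j)
  case 0
  then show ?case by auto
next
  case (Suc q)
  have "0 \<le> (x - t ! j) / (t ! (j + q + 1) - t ! j) * bspl t q j x"
  proof (cases "bspl t q j x = 0")
    case False
    then have "t ! j \<le> x \<and> x < t ! (j + q + 1)" using bspl_supp[OF assms, of j q x] Suc.prems by auto
    then show ?thesis using Suc.IH[of j] Suc.prems by (auto intro!: mult_nonneg_nonneg divide_nonneg_nonneg)
  qed simp
  moreover have "0 \<le> (t ! (j + q + 2) - x) / (t ! (j + q + 2) - t ! (j + 1)) * bspl t q (j+1) x"
  proof (cases "bspl t q (j+1) x = 0")
    case False
    then have "t ! (j+1) \<le> x \<and> x < t ! (j + 1 + q + 1)" using bspl_supp[OF assms, of "j+1" q x] Suc.prems by auto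
    then show ?thesis using Suc.IH[of "j+1"] Suc.prems by (auto intro!: mult_nonneg_nonneg divide_nonneg_nonneg)
  qed simp
  ultimately show ?case by simp
qed

lemma bspl_pos:
  assumes "sorted t"
  shows "j + q + 1 < length t \<Longrightarrow> x \<notin> set t \<Longrightarrow> t ! j < x \<Longrightarrow> x < t ! (j + q + 1) \<Longrightarrow> 0 < bspl t q j x"
proof (induction q arbitrary: j)
  case 0
  then show ?case by auto
next
  case (Suc q)
  have m1: "t ! (j+1) \<le> t ! (j+q+1)"
    using Suc.prems(1) assms by (auto intro: sorted_nth_mono)
  have n1: "0 \<le> (x - t ! j) / (t ! (j + q + 1) - t ! j) * bspl t q j x"
  proof (cases "bspl t q j x = 0")
    case False
    then have "t ! j \<le> x \<and> x < t ! (j + q + 1)" using bspl_supp[OF assms, of j q x] Suc.prems by auto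
    then show ?thesis using bspl_nonneg[OF assms, of j q x] Suc.prems by (auto intro!: mult_nonneg_nonneg divide_nonneg_nonneg)
  qed simp
  have n2: "0 \<le> (t ! (j + q + 2) - x) / (t ! (j + q + 2) - t ! (j + 1)) * bspl t q (j+1) x"
  proof (cases "bspl t q (j+1) x = 0")
    case False
    then have "t ! (j+1) \<le> x \<and> x < t ! (j + 1 + q + 1)" using bspl_supp[OF assms, of "j+1" q x] Suc.prems by auto
    then show ?thesis using bspl_nonneg[OF assms, of "j+1" q x] Suc.prems by (auto intro!: mult_nonneg_nonneg divide_nonneg_nonneg)
  qed simp
  have xne: "x \<noteq> t ! (j+q+1)" proof
    assume "x = t ! (j+q+1)"
    moreover have "t ! (j+q+1) \<in> set t" using Suc.prems(1) by (intro nth_mem) simp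
    ultimately show False using Suc.prems(2) by simp
  qed
  show ?case
  proof (cases "x < t ! (j+q+1)")
    case True
    have "0 < bspl t q j x" using Suc.IH[of j] Suc.prems True by auto
    moreover have "0 < (x - t ! j) / (t ! (j + q + 1) - t ! j)" using True Suc.prems by auto
    ultimately have "0 < (x - t ! j) / (t ! (j + q + 1) - t ! j) * bspl t q j x" by (rule mult_pos_pos[rotated])
    then show ?thesis using n2 by simp
  next
    case False
    then have xg: "t ! (j+q+1) < x" using xne by auto
    have "0 < bspl t q (j+1) x" using Suc.IH[of "j+1"] Suc.prems xg m1 by auto
    moreover have "0 < (t ! (j + q + 2) - x) / (t ! (j + q + 2) - t ! (j + 1))" using xg m1 Suc.prems by auto
    ultimately have "0 < (t ! (j + q + 2) - x) / (t ! (j + q + 2) - t ! (j + 1)) * bspl t q (j+1) x" by (rule mult_pos_pos[rotated])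
    then show ?thesis using n1 by simp
  qed
qed

lemma tp_nonzero:
  assumes "\<forall>i. sorted (knots K0 k i)" "\<forall>i. j i + p i + 1 < length (knots K0 k i)"
    and "tp_bspline p K0 k j x \<noteq> 0"
  shows "\<forall>i. knots K0 k i ! j i \<le> x $ i \<and> x $ i < knots K0 k i ! (j i + p i + 1)"
proof
  fix i
  have "bspl (knots K0 k i) (p i) (j i) (x $ i) \<noteq> 0"
    using assms(3) unfolding tp_bspline_def by auto
  then show "knots K0 k i ! j i \<le> x $ i \<and> x $ i < knots K0 k i ! (j i + p i + 1)"
    using bspl_supp[of "knots K0 k i" "j i" "p i" "x $ i"] assms(1,2) by auto
qed

lemma tp_supp_sub:
  assumes "\<forall>i. sorted (knots K0 k i)" "\<forall>i. j i + p i + 1 < length (knots K0 k i)"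
  shows "supp (tp_bspline p K0 k j) \<subseteq>
     cbox (\<chi> i. knots K0 k i ! j i) (\<chi> i. knots K0 k i ! (j i + p i + 1))"
  unfolding supp_def
proof (rule closure_minimal)
  show "{x. tp_bspline p K0 k j x \<noteq> 0} \<subseteq> cbox (\<chi> i. knots K0 k i ! j i) (\<chi> i. knots K0 k i ! (j i + p i + 1))"
    using tp_nonzero[OF assms] by (auto simp: mem_box_cart less_imp_le)
qed (rule closed_cbox)

lemma tp_supp_lohi:
  assumes "\<forall>i. sorted (knots K0 k i)" "\<forall>i. j i + p i + 1 < length (knots K0 k i)"
    and "x \<in> supp (tp_bspline p K0 k j)"
  shows "\<forall>i. knots K0 k i ! j i < knots K0 k i ! (j i + p i + 1)"
proof -
  have "{x. tp_bspline p K0 k j x \<noteq> 0} \<noteq> {}" using assms(3) unfolding supp_def by (metis closure_empty empty_iff)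
  then obtain z where "tp_bspline p K0 k j z \<noteq> 0" by auto
  from tp_nonzero[OF assms(1,2) this] show ?thesis by (meson le_less_trans)
qed

lemma approx_1d:
  fixes lo hi y d :: real
  assumes "lo < hi" "lo \<le> y" "y \<le> hi" "d > 0" "finite F"
  shows "\<exists>u. lo < u \<and> u < hi \<and> u \<notin> F \<and> \<bar>u - y\<bar> < d"
proof -
  have lt: "max lo (y - d) < min hi (y + d)" using assms by auto
  have "infinite ({max lo (y - d)<..<min hi (y + d)} - F)"
    using infinite_Ioo[OF lt] assms(5) by (metis Diff_infinite_finite)
  then obtain u where "u \<in> {max lo (y - d)<..<min hi (y + d)} - F"
    by (metis ex_in_conv finite.emptyI)
  then show ?thesis by (intro exI[of _ u]) auto
qed

lemma tp_supp_sup: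
  fixes p :: "'n::finite \<Rightarrow> nat"
  assumes "\<forall>i. sorted (knots K0 k i)" "\<forall>i. j i + p i + 1 < length (knots K0 k i)"
    and lohi: "\<forall>i. knots K0 k i ! j i < knots K0 k i ! (j i + p i + 1)"
  shows "cbox (\<chi> i. knots K0 k i ! j i) (\<chi> i. knots K0 k i ! (j i + p i + 1)) \<subseteq> supp (tp_bspline p K0 k j)"
proof
  fix y :: "real^'n"
  assume y: "y \<in> cbox (\<chi> i. knots K0 k i ! j i) (\<chi> i. knots K0 k i ! (j i + p i + 1))"
  show "y \<in> supp (tp_bspline p K0 k j)"
    unfolding supp_def closure_approachable
  proof (intro allI impI)
    fix e :: real assume e: "e > 0"
    define d where "d = e / real CARD('n)"
    have d: "d > 0" using e unfolding d_def by simp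
    have "\<forall>i. \<exists>u. knots K0 k i ! j i < u \<and> u < knots K0 k i ! (j i + p i + 1) \<and> u \<notin> set (knots K0 k i) \<and> \<bar>u - y $ i\<bar> < d"
    proof
      fix i
      show "\<exists>u. knots K0 k i ! j i < u \<and> u < knots K0 k i ! (j i + p i + 1) \<and> u \<notin> set (knots K0 k i) \<and> \<bar>u - y $ i\<bar> < d"
        using approx_1d[of "knots K0 k i ! j i" "knots K0 k i ! (j i + p i + 1)" "y $ i" d "set (knots K0 k i)"]
          lohi y d by (auto simp: mem_box_cart)
    qed
    then obtain f where f: "\<And>i. knots K0 k i ! j i < f i \<and> f i < knots K0 k i ! (j i + p i + 1) \<and> f i \<notin> set (knots K0 k i) \<and> \<bar>f i - y $ i\<bar> < d"
      by metis
    define x :: "real^'n" where "x = (\<chi> i. f i)"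
    have "tp_bspline p K0 k j x > 0"
      unfolding tp_bspline_def
    proof (rule prod_pos)
      fix i :: 'n
      show "0 < bspl (knots K0 k i) (p i) (j i) (x $ i)"
        using bspl_pos[of "knots K0 k i" "j i" "p i" "x $ i"] assms(1,2) f[of i] unfolding x_def by auto
    qed
    moreover have "dist x y < e"
    proof -
      have "dist x y = norm (x - y)" by (simp add: dist_norm)
      also have "\<dots> \<le> (\<Sum>i\<in>UNIV. \<bar>(x - y) $ i\<bar>)" by (rule norm_le_l1_cart)
      also have "\<dots> < (\<Sum>i\<in>(UNIV::'n set). d)"
        by (rule sum_strict_mono) (use f in \<open>auto simp: x_def\<close>)
      also have "\<dots> = e" unfolding d_def by simp
      finally show ?thesis .
    qed
    ultimately show "\<exists>x\<in>{x. tp_bspline p K0 k j x \<noteq> 0}. dist x y < e" by force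
  qed
qed

lemma consec_diff:
  assumes "sorted t" "m + 1 < length t" "\<And>a b. is_span t a b \<Longrightarrow> b - a \<le> h" "0 \<le> h"
  shows "t ! (m+1) - t ! m \<le> h"
proof (cases "t ! m < t ! (m+1)")
  case True
  have "is_span t (t ! m) (t ! (m+1))"
    unfolding is_span_def
  proof (intro conjI)
    show "t ! m \<in> set t" "t ! (m+1) \<in> set t" using assms(2) by auto
    show "\<not> (\<exists>c\<in>set t. t ! m < c \<and> c < t ! (m + 1))"
    proof
      assume "\<exists>c\<in>set t. t ! m < c \<and> c < t ! (m + 1)"
      then obtain r where r: "r < length t" "t ! m < t ! r" "t ! r < t ! (m+1)"
        by (metis in_set_conv_nth)
      show False
      proof (cases "r \<le> m")
        case True then show False using sorted_nth_mono[OF assms(1) True] r assms(2) by auto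
      next
        case False then have "m + 1 \<le> r" by auto
        then show False using sorted_nth_mono[OF assms(1) \<open>m+1 \<le> r\<close>] r by auto
      qed
    qed
  qed (use True in auto)
  then show ?thesis using assms(3) by blast
next
  case False
  then show ?thesis using assms(4) by auto
qed

lemma multi_diff:
  assumes "sorted t" "\<And>a b. is_span t a b \<Longrightarrow> b - a \<le> h" "0 \<le> h"
  shows "j + q < length t \<Longrightarrow> t ! (j+q) - t ! j \<le> real q * h"
proof (induction q)
  case 0 then show ?case by simp
next
  case (Suc q)
  have "t ! (j+q+1) - t ! (j+q) \<le> h" using consec_diff[OF assms(1) _ assms(2,3), of "j+q"] Suc.prems by auto
  then show ?case using Suc by (auto simp: algebra_simps)
qed

lemma find_span:
  fixes t :: "real list"
  assumes "lo \<in> set t" "hi \<in> set t" "lo < hi" "lo \<le> x" "x \<le> hi"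
  shows "\<exists>a b. is_span t a b \<and> lo \<le> a \<and> a \<le> x \<and> x \<le> b \<and> b \<le> hi"
proof -
  define A where "A = {c\<in>set t. c \<le> x \<and> c < hi}"
  have A: "finite A" "lo \<in> A" unfolding A_def using assms by auto
  define a where "a = Max A"
  have a: "a \<in> A" "\<And>c. c \<in> A \<Longrightarrow> c \<le> a" using A unfolding a_def by (auto intro: Max_in)
  define B where "B = {c\<in>set t. a < c}"
  have B: "finite B" "hi \<in> B" unfolding B_def using a assms A_def by auto
  define b where "b = Min B"
  have b: "b \<in> B" "\<And>c. c \<in> B \<Longrightarrow> b \<le> c" using B unfolding b_def by (auto intro: Min_in)
  have "b \<le> hi" using b B by auto
  have "x \<le> b"
  proof (rule ccontr)
    assume "\<not> x \<le> b"
    then have "b \<in> A" using b(1) \<open>b \<le> hi\<close> assms(5) unfolding A_def B_def by auto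
    then show False using a(2) b(1) unfolding B_def by force
  qed
  have "is_span t a b"
    unfolding is_span_def using a(1) b(1) b(2) unfolding A_def B_def by force
  moreover have "lo \<le> a" using a(2) A by auto
  ultimately show ?thesis using a(1) \<open>x \<le> b\<close> \<open>b \<le> hi\<close> unfolding A_def by blast
qed

lemma box_center_cbox:
  fixes a b :: "real^'n::finite"
  assumes "\<forall>i. a $ i \<le> b $ i"
  shows "box_center (cbox a b) = (\<chi> i. (a $ i + b $ i) / 2)"
proof -
  have "Inf ((\<lambda>x. x $ i) ` cbox a b) = a $ i" for i
  proof (rule cInf_eq_minimum)
    show "a $ i \<in> (\<lambda>x. x $ i) ` cbox a b" using assms by (intro image_eqI[of _ _ a]) (auto simp: mem_box_cart)
  qed (auto simp: mem_box_cart)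
  moreover have "Sup ((\<lambda>x. x $ i) ` cbox a b) = b $ i" for i
  proof (rule cSup_eq_maximum)
    show "b $ i \<in> (\<lambda>x. x $ i) ` cbox a b" using assms by (intro image_eqI[of _ _ b]) (auto simp: mem_box_cart)
  qed (auto simp: mem_box_cart)
  ultimately show ?thesis unfolding box_center_def by simp
qed

lemma box_center_in:
  fixes a b :: "real^'n::finite"
  assumes "\<forall>i. a $ i \<le> b $ i"
  shows "box_center (cbox a b) \<in> cbox a b"
  using box_center_cbox[OF assms] assms by (auto simp: mem_box_cart)

lemma dist_in_cbox:
  fixes a b x y :: "real^'n::finite"
  assumes "x \<in> cbox a b" "y \<in> cbox a b"
  shows "dist x y \<le> (\<Sum>i\<in>UNIV. b $ i - a $ i)"
proof -
  have "dist x y = norm (x - y)" by (simp add: dist_norm)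
  also have "\<dots> \<le> (\<Sum>i\<in>UNIV. \<bar>(x - y) $ i\<bar>)" by (rule norm_le_l1_cart)
  also have "\<dots> \<le> (\<Sum>i\<in>UNIV. b $ i - a $ i)"
  proof (rule sum_mono)
    fix i
    have "a $ i \<le> x $ i" "x $ i \<le> b $ i" "a $ i \<le> y $ i" "y $ i \<le> b $ i"
      using assms by (auto simp: mem_box_cart)
    then show "\<bar>(x - y) $ i\<bar> \<le> b $ i - a $ i" by auto
  qed
  finally show ?thesis .
qed

lemma cell_props:
  fixes K0 :: "'n::finite \<Rightarrow> real list"
  assumes "\<forall>i. set (K0 i) \<subseteq> {0..1}" "C \<in> cells K0 k"
  shows "\<exists>a b. C = cbox a b \<and> (\<forall>i. a $ i < b $ i) \<and> (\<forall>i. b $ i - a $ i \<le> (1/2)^k)"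
proof -
  obtain a b where "C = cbox a b" "\<forall>i. is_span (knots K0 k i) (a $ i) (b $ i)"
    using assms(2) unfolding cells_def by auto
  moreover have "\<forall>i. a $ i < b $ i" using \<open>\<forall>i. is_span (knots K0 k i) (a $ i) (b $ i)\<close> unfolding is_span_def by blast
  moreover have "\<forall>i. b $ i - a $ i \<le> (1/2)^k"
    using \<open>\<forall>i. is_span (knots K0 k i) (a $ i) (b $ i)\<close> span_knots[of K0] assms(1) by blast
  ultimately show ?thesis by blast
qed

lemma cell_center:
  fixes K0 :: "'n::finite \<Rightarrow> real list"
  assumes "\<forall>i. set (K0 i) \<subseteq> {0..1}" "C \<in> cells K0 k"
  shows "box_center C \<in> C" "\<And>x. x \<in> C \<Longrightarrow> dist (box_center C) x \<le> real CARD('n) * (1/2)^k"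
proof -
  obtain a b where ab: "C = cbox a b" "\<forall>i. a $ i < b $ i" "\<forall>i. b $ i - a $ i \<le> (1/2)^k"
    using cell_props[OF assms] by blast
  show c: "box_center C \<in> C" using box_center_in[of a b] ab by (simp add: less_imp_le)
  fix x assume "x \<in> C"
  then have "dist (box_center C) x \<le> (\<Sum>i\<in>UNIV. b $ i - a $ i)"
    using dist_in_cbox c ab(1) by blast
  also have "\<dots> \<le> (\<Sum>i\<in>(UNIV::'n set). (1/2)^k)" by (rule sum_mono) (use ab in auto)
  finally show "dist (box_center C) x \<le> real CARD('n) * (1/2)^k" by simp
qed



lemma key_step:
  fixes p :: "'n::finite \<Rightarrow> nat" and K0 :: "'n \<Rightarrow> real list"
  assumes so: "\<forall>i. sorted (K0 i)" and s01: "\<forall>i. set (K0 i) \<subseteq> {0..1}"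
    and adm: "admissible p K0 \<Omega>"
    and M: "(l, M) \<in> mesh K0 \<Omega>" and M0: "(l0, M0) \<in> mesh K0 \<Omega>"
    and \<beta>: "\<beta> \<in> hbasis p K0 \<Omega>" "M \<subseteq> supp \<beta>" "M0 \<subseteq> supp \<beta>"
  shows "dist (box_center M) (box_center M0) \<le> 2 * (\<Sum>i\<in>UNIV. real (p i + 1)) * (1/2)^l"
proof -
  obtain k' where "\<beta> \<in> {\<beta> \<in> bsplines p K0 k'. supp \<beta> \<subseteq> \<Omega> k' \<and> \<not> supp \<beta> \<subseteq> \<Omega> (Suc k')}"
    using \<beta>(1) unfolding hbasis_def by (rule UN_E)
  then have k': "\<beta> \<in> bsplines p K0 k'" "supp \<beta> \<subseteq> \<Omega> k'" "\<not> supp \<beta> \<subseteq> \<Omega> (Suc k')" by simp_all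
  obtain j where j: "\<beta> = tp_bspline p K0 k' j" "\<forall>i. j i + p i + 1 < length (knots K0 k' i)"
    using k'(1) unfolding bsplines_def by blast
  have sok: "\<forall>i. sorted (knots K0 k' i)" using so by (simp add: sorted_knots)
  define lo :: "real^'n" where "lo = (\<chi> i. knots K0 k' i ! j i)"
  define hi :: "real^'n" where "hi = (\<chi> i. knots K0 k' i ! (j i + p i + 1))"
  obtain x where x: "x \<in> supp \<beta>" "x \<notin> \<Omega> (Suc k')" using k'(3) by auto
  have lohi: "\<forall>i. knots K0 k' i ! j i < knots K0 k' i ! (j i + p i + 1)"
    using tp_supp_lohi[OF sok j(2)] x(1) j(1) by blast
  have sub: "supp \<beta> \<subseteq> cbox lo hi" using tp_supp_sub[OF sok j(2)] j(1) lo_def hi_def by simp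
  have sup: "cbox lo hi \<subseteq> supp \<beta>" using tp_supp_sup[OF sok j(2) lohi] j(1) lo_def hi_def by simp
  have xb: "x \<in> cbox lo hi" using sub x(1) by auto
  have "\<forall>i. \<exists>ab. is_span (knots K0 k' i) (fst ab) (snd ab) \<and> lo $ i \<le> fst ab \<and> fst ab \<le> x $ i \<and> x $ i \<le> snd ab \<and> snd ab \<le> hi $ i"
  proof
    fix i
    have "lo $ i \<in> set (knots K0 k' i)" "hi $ i \<in> set (knots K0 k' i)"
    proof -
      have "j i < length (knots K0 k' i)" "j i + p i + 1 < length (knots K0 k' i)" using j(2) by (auto dest: spec[of _ i])
      then show "lo $ i \<in> set (knots K0 k' i)" "hi $ i \<in> set (knots K0 k' i)"
        unfolding lo_def hi_def by auto
    qed
    then obtain a b where "is_span (knots K0 k' i) a b \<and> lo $ i \<le> a \<and> a \<le> x $ i \<and> x $ i \<le> b \<and> b \<le> hi $ i"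
      using find_span[of "lo $ i" "knots K0 k' i" "hi $ i" "x $ i"] lohi xb
      unfolding lo_def hi_def by (auto simp: mem_box_cart)
    then show "\<exists>ab. is_span (knots K0 k' i) (fst ab) (snd ab) \<and> lo $ i \<le> fst ab \<and> fst ab \<le> x $ i \<and> x $ i \<le> snd ab \<and> snd ab \<le> hi $ i"
      by (intro exI[of _ "(a,b)"]) auto
  qed
  then obtain f where f0: "\<forall>i. is_span (knots K0 k' i) (fst (f i)) (snd (f i)) \<and> lo $ i \<le> fst (f i) \<and> fst (f i) \<le> x $ i \<and> x $ i \<le> snd (f i) \<and> snd (f i) \<le> hi $ i"
    by (rule choice[THEN exE])
  then have f: "\<And>i. is_span (knots K0 k' i) (fst (f i)) (snd (f i)) \<and> lo $ i \<le> fst (f i) \<and> fst (f i) \<le> x $ i \<and> x $ i \<le> snd (f i) \<and> snd (f i) \<le> hi $ i" by blast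
  define Q where "Q = cbox (\<chi> i. fst (f i)) (\<chi> i. snd (f i))"
  have Qc: "Q \<in> cells K0 k'" unfolding Q_def cells_def
    by (rule CollectI, rule exI[of _ "\<chi> i. fst (f i)"], rule exI[of _ "\<chi> i. snd (f i)"]) (use f in simp)
  have xQ: "x \<in> Q" unfolding Q_def using f by (auto simp: mem_box_cart)
  have Qs: "Q \<subseteq> cbox lo hi" unfolding Q_def
  proof
    fix y assume "y \<in> cbox (\<chi> i. fst (f i)) (\<chi> i. snd (f i))"
    then have y: "\<And>i. fst (f i) \<le> y $ i \<and> y $ i \<le> snd (f i)" by (simp add: mem_box_cart)
    show "y \<in> cbox lo hi" unfolding mem_box_cart
    proof
      fix i
      show "lo $ i \<le> y $ i \<and> y $ i \<le> hi $ i" using f[of i] y[of i] by linarith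
    qed
  qed
  have "Q \<subseteq> \<Omega> k'" using Qs sup k'(2) by blast
  moreover have "\<not> Q \<subseteq> \<Omega> (Suc k')" using xQ x(2) by blast
  ultimately have Qm: "(k', Q) \<in> mesh K0 \<Omega>"
    unfolding mesh_def using Qc by simp
  have "Q \<subseteq> supp \<beta>" using Qs sup by blast
  then have "(k', Q) \<in> neighbors p K0 \<Omega> (l, M)"
    unfolding neighbors_def using Qm \<beta> by auto
  moreover have "\<forall>T \<in> mesh K0 \<Omega>. \<forall>T' \<in> neighbors p K0 \<Omega> T. \<bar>int (fst T) - int (fst T')\<bar> \<le> 1"
    using adm unfolding admissible_def .
  ultimately have "\<bar>int (fst (l,M)) - int (fst (k',Q))\<bar> \<le> 1" using M by blast
  then have "\<bar>int l - int k'\<bar> \<le> 1" by simp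
  then have lk: "l \<le> k' + 1" by linarith
  have Mc: "M \<in> cells K0 l" "M0 \<in> cells K0 l0" using M M0 unfolding mesh_def by auto
  have cM: "box_center M \<in> cbox lo hi" using cell_center(1)[OF s01 Mc(1)] \<beta>(2) sub by auto
  have cM0: "box_center M0 \<in> cbox lo hi" using cell_center(1)[OF s01 Mc(2)] \<beta>(3) sub by auto
  have "dist (box_center M) (box_center M0) \<le> (\<Sum>i\<in>UNIV. hi $ i - lo $ i)"
    by (rule dist_in_cbox[OF cM cM0])
  also have "\<dots> \<le> (\<Sum>i\<in>UNIV. real (p i + 1) * (1/2)^k')"
  proof (rule sum_mono)
    fix i
    have so_i: "sorted (knots K0 k' i)" using sok by blast
    have sp_i: "\<And>a b. is_span (knots K0 k' i) a b \<Longrightarrow> b - a \<le> (1/2)^k'"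
      using span_knots[of K0 i k'] s01 by blast
    have len: "j i + (p i + 1) < length (knots K0 k' i)" using j(2) by (simp add: add.assoc)
    have "knots K0 k' i ! (j i + (p i + 1)) - knots K0 k' i ! j i \<le> real (p i + 1) * (1/2)^k'"
      using multi_diff[OF so_i sp_i _ len] by simp
    then show "hi $ i - lo $ i \<le> real (p i + 1) * (1/2)^k'" unfolding lo_def hi_def by (simp add: add.assoc)
  qed
  also have "\<dots> = (\<Sum>i\<in>UNIV. real (p i + 1)) * (1/2)^k'" by (simp add: sum_distrib_right)
  also have "\<dots> \<le> (\<Sum>i\<in>UNIV. real (p i + 1)) * (2 * (1/2)^l)"
  proof (rule mult_left_mono)
    have "(1/2::real)^(k'+1) \<le> (1/2)^l" using lk by (intro power_decreasing) auto
    then show "(1/2::real)^k' \<le> 2 * (1/2)^l" by simp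
  qed (auto intro: sum_nonneg)
  finally show ?thesis by simp
qed

lemma marked_bound:
  fixes p :: "'n::finite \<Rightarrow> nat" and K0 :: "'n \<Rightarrow> real list"
  assumes so: "\<forall>i. sorted (K0 i)" and s01: "\<forall>i. set (K0 i) \<subseteq> {0..1}"
    and adm: "admissible p K0 \<Omega>"
    and T': "(L, M') \<in> mesh K0 \<Omega>"
  shows "(l, M) \<in> marked p K0 \<Omega> {(L, M')} i \<Longrightarrow>
     (l, M) \<in> mesh K0 \<Omega> \<and> dist (box_center M) (box_center M') \<le> 4 * (\<Sum>i\<in>UNIV. real (p i + 1)) * (1/2)^l"
proof (induction i arbitrary: l M)
  case 0
  have "0 \<le> (\<Sum>i\<in>UNIV. real (p i + 1))" by (intro sum_nonneg) auto
  then show ?case using T' 0 by simp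
next
  case (Suc i)
  define P where "P = (\<Sum>i\<in>UNIV. real (p i + 1))"
  have P0: "0 \<le> P" unfolding P_def by (intro sum_nonneg) auto
  from Suc.prems have "(l, M) \<in> marked p K0 \<Omega> {(L, M')} i \<or>
      (\<exists>T \<in> marked p K0 \<Omega> {(L, M')} i. (l, M) \<in> bad_neighbors p K0 \<Omega> T)" by auto
  then show ?case
  proof
    assume "(l, M) \<in> marked p K0 \<Omega> {(L, M')} i"
    then show ?thesis using Suc.IH by blast
  next
    assume "\<exists>T \<in> marked p K0 \<Omega> {(L, M')} i. (l, M) \<in> bad_neighbors p K0 \<Omega> T"
    then obtain l0 M0 where m0: "(l0, M0) \<in> marked p K0 \<Omega> {(L, M')} i"
      and bn: "(l, M) \<in> bad_neighbors p K0 \<Omega> (l0, M0)" by auto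
    have ih: "(l0, M0) \<in> mesh K0 \<Omega>" "dist (box_center M0) (box_center M') \<le> 4 * P * (1/2)^l0"
      using Suc.IH[OF m0] unfolding P_def by auto
    from bn have l0: "l0 = l + 1" and nb: "(l, M) \<in> neighbors p K0 \<Omega> (l0, M0)"
      unfolding bad_neighbors_def by auto
    from nb have Mm: "(l, M) \<in> mesh K0 \<Omega>" and "\<exists>\<beta>\<in>hbasis p K0 \<Omega>. M0 \<subseteq> supp \<beta> \<and> M \<subseteq> supp \<beta>"
      unfolding neighbors_def by auto
    then obtain \<beta> where \<beta>: "\<beta> \<in> hbasis p K0 \<Omega>" "M0 \<subseteq> supp \<beta>" "M \<subseteq> supp \<beta>" by blast
    have st: "dist (box_center M) (box_center M0) \<le> 2 * P * (1/2)^l"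
      using key_step[OF so s01 adm Mm ih(1) \<beta>(1,3,2)] unfolding P_def .
    have "dist (box_center M) (box_center M') \<le> dist (box_center M) (box_center M0) + dist (box_center M0) (box_center M')"
      by (rule dist_triangle)
    also have "\<dots> \<le> 2 * P * (1/2)^l + 4 * P * (1/2)^(l+1)" using st ih(2) l0 by simp
    also have "\<dots> = 4 * P * (1/2)^l" by simp
    finally show ?thesis using Mm unfolding P_def by simp
  qed
qed

lemma powr_half: "(2::real) powr (- real n) = (1/2)^n"
  by (simp add: powr_minus powr_realpow power_one_over inverse_eq_divide)

theorem lemma5p5:
  fixes p :: "'n::finite \<Rightarrow> nat" and K0 :: "'n \<Rightarrow> real list"
  assumes "CARD('n) \<ge> 2"
    and "\<forall>i. p i \<ge> 1"
    and "\<forall>i. open_knots (p i) (K0 i)"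
  shows "\<exists>C>0. \<forall>\<Omega> T'. hier_domains K0 \<Omega> \<and> admissible p K0 \<Omega> \<and> T' \<in> mesh K0 \<Omega> \<longrightarrow>
     (\<forall>T \<in> mesh K0 (refine p K0 \<Omega> {T'}) - mesh K0 \<Omega>.
        dist (box_center (snd T)) (box_center (snd T')) \<le> C * 2 powr (- real (fst T)))"
proof -
  have so: "\<forall>i. sorted (K0 i)" and s01: "\<forall>i. set (K0 i) \<subseteq> {0..1}"
    using assms(3) unfolding open_knots_def by auto
  define P where "P = (\<Sum>i\<in>UNIV. real (p i + 1))"
  define d where "d = real CARD('n)"
  have P0: "0 \<le> P" unfolding P_def by (intro sum_nonneg) auto
  have d0: "0 < d" unfolding d_def by simp
  show ?thesis
  proof (intro exI[of _ "3 * d + 8 * P"] conjI allI impI ballI)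
    show "0 < 3 * d + 8 * P" using P0 d0 by simp
    fix \<Omega> T' T
    assume H: "hier_domains K0 \<Omega> \<and> admissible p K0 \<Omega> \<and> T' \<in> mesh K0 \<Omega>"
      and T: "T \<in> mesh K0 (refine p K0 \<Omega> {T'}) - mesh K0 \<Omega>"
    obtain L M' where T'eq: "T' = (L, M')" by (cases T')
    obtain k C0 where Teq: "T = (k, C0)" by (cases T)
    have adm: "admissible p K0 \<Omega>" and T'm: "(L, M') \<in> mesh K0 \<Omega>" using H T'eq by auto
    have C0: "C0 \<in> cells K0 k" "C0 \<subseteq> refine p K0 \<Omega> {T'} k" "\<not> C0 \<subseteq> refine p K0 \<Omega> {T'} (Suc k)"
      and nm: "(k, C0) \<notin> mesh K0 \<Omega>"
      using T Teq unfolding mesh_def by auto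
    have "\<Omega> (Suc k) \<subseteq> refine p K0 \<Omega> {T'} (Suc k)" unfolding refine_def by auto
    then have nS: "\<not> C0 \<subseteq> \<Omega> (Suc k)" using C0(3) by blast
    show "dist (box_center (snd T)) (box_center (snd T')) \<le> (3 * d + 8 * P) * 2 powr (- real (fst T))"
    proof (cases k)
      case 0
      then have "C0 \<subseteq> \<Omega> k" using C0(2) unfolding refine_def by simp
      then have "(k, C0) \<in> mesh K0 \<Omega>" using C0(1) nS unfolding mesh_def by simp
      then show ?thesis using nm by contradiction
    next
      case (Suc l)
      have "\<not> C0 \<subseteq> \<Omega> k"
      proof
        assume "C0 \<subseteq> \<Omega> k"
        then have "(k, C0) \<in> mesh K0 \<Omega>" using C0(1) nS unfolding mesh_def by simp
        then show False using nm by contradiction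
      qed
      then obtain y where y: "y \<in> C0" "y \<notin> \<Omega> (Suc l)" using Suc by auto
      have "C0 \<subseteq> \<Omega> (Suc l) \<union> \<Union>{M. (l, M) \<in> marked_final p K0 \<Omega> {T'}}"
        using C0(2) Suc unfolding refine_def by simp
      then obtain M where M: "(l, M) \<in> marked_final p K0 \<Omega> {T'}" "y \<in> M" using y by blast
      then obtain i where "(l, M) \<in> marked p K0 \<Omega> {(L, M')} i"
        unfolding marked_final_def T'eq by blast
      from marked_bound[OF so s01 adm T'm this]
      have Mm: "(l, M) \<in> mesh K0 \<Omega>" and dM: "dist (box_center M) (box_center M') \<le> 4 * P * (1/2)^l"
        unfolding P_def by auto
      have Mc: "M \<in> cells K0 l" using Mm unfolding mesh_def by simp
      have d1: "dist (box_center C0) y \<le> d * (1/2)^(Suc l)"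
        using cell_center(2)[OF s01 C0(1) y(1)] Suc unfolding d_def by simp
      have d2: "dist y (box_center M) \<le> d * (1/2)^l"
        using cell_center(2)[OF s01 Mc M(2)] unfolding d_def by (simp add: dist_commute)
      have "dist (box_center C0) (box_center M') \<le> dist (box_center C0) y + dist y (box_center M) + dist (box_center M) (box_center M')"
        by (meson dist_triangle add_mono order_trans order_refl)
      also have "\<dots> \<le> d * (1/2)^(Suc l) + d * (1/2)^l + 4 * P * (1/2)^l"
        using d1 d2 dM by linarith
      also have "\<dots> = (3 * d + 8 * P) * (1/2)^(Suc l)" by (simp add: algebra_simps)
      finally have "dist (box_center C0) (box_center M') \<le> (3 * d + 8 * P) * 2 powr (- real (Suc l))"
        by (simp only: powr_half)
      then show ?thesis using Teq T'eq Suc by simp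
    qed
  qed
qed

end
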